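(* Let $\mathbf{V}_1,\dots,\mathbf{V}_L\in\mathbb{R}^{1\times d}$ be value vectors and $\mathbf{y}$ a target embedding. Let $H$ be the Hessian of the objective of the linear coding problem $\min_\alpha\|\sum_{j=1}^L\alpha_j\mathbf{V}_j-\mathbf{y}\|_2^2$ (subject to $\sum_j\alpha_j=1,\ \alpha_j>0$), and let $\bar H$ be the Hessian of the objective of the group coding problem $\min_{\bar\alpha}\|\sum_{g=1}^k\frac{\bar\alpha_g}{|G_g|}\sum_{j\in G_g}\mathbf{V}_j-\mathbf{y}\|_2^2$ (subject to $\sum_g\bar\alpha_g=1,\ \bar\alpha_g>0$), where $G_1,\dots,G_k$ partition $\{1,\dots,L\}$ and each group has size $|G_g|=m$. For a matrix $A$ let $\kappa(A)=\lambda_{\max}(A)/\lambda_{\min}(A)$ be its condition number, with $\lambda_{\max},\lambda_{\min}$ its maximum and minimum eigenvalues. If $\lambda_{\min}(H)>0$ and $\lambda_{\min}(\bar H)>0$, then $\kappa(\bar H)\le\kappa(H)$. *)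

theory Defs
  imports "HOL-Analysis.Analysis"
begin

definition hessian :: "(real^'n \<Rightarrow> real) \<Rightarrow> real^'n \<Rightarrow> real^'n^'n" where
  "hessian f x = (\<chi> i j. deriv (\<lambda>t. deriv (\<lambda>s. f (x + t *\<^sub>R axis i 1 + s *\<^sub>R axis j 1)) 0) 0)"

definition eigvals :: "real^'n^'n \<Rightarrow> real set" where
  "eigvals A = {c. \<exists>v. v \<noteq> 0 \<and> A *v v = c *\<^sub>R v}"

definition lambda_max :: "real^'n^'n \<Rightarrow> real" where
  "lambda_max A = Max (eigvals A)"

definition lambda_min :: "real^'n^'n \<Rightarrow> real" where
  "lambda_min A = Min (eigvals A)"

definition cond_num :: "real^'n^'n \<Rightarrow> real" where
  "cond_num A = lambda_max A / lambda_min A"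

definition lin_obj :: "('L::finite \<Rightarrow> real^'d) \<Rightarrow> real^'d \<Rightarrow> real^'L \<Rightarrow> real" where
  "lin_obj V y \<alpha> = (norm ((\<Sum>j\<in>UNIV. (\<alpha> $ j) *\<^sub>R V j) - y))\<^sup>2"

definition grp_obj :: "('L::finite \<Rightarrow> real^'d) \<Rightarrow> real^'d \<Rightarrow> ('L \<Rightarrow> 'k::finite) \<Rightarrow> real^'k \<Rightarrow> real" where
  "grp_obj V y grp \<beta> =
     (norm ((\<Sum>g\<in>UNIV. (\<beta> $ g / real (card {j. grp j = g})) *\<^sub>R (\<Sum>j\<in>{j. grp j = g}. V j)) - y))\<^sup>2"

end

theory Submission imports Defs begin

definition symm :: "real^'n^'n \<Rightarrow> bool" where "symm A \<longleftrightarrow> transpose A = A"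

lemma symm_inner: "symm A \<Longrightarrow> x \<bullet> (A *v y) = (A *v x) \<bullet> y"
  unfolding symm_def by (metis dot_lmul_matrix transpose_matrix_vector)

lemma eig_rayleigh: "A *v v = c *\<^sub>R v \<Longrightarrow> v \<bullet> (A *v v) = c * (norm v)^2"
  by (simp add: power2_norm_eq_inner)

lemma eigvals_finite:
  assumes "symm A" shows "finite (eigvals A)"
proof -
  define ev where "ev c = (SOME v. v \<noteq> 0 \<and> A *v v = c *\<^sub>R v)" for c
  have ev: "ev c \<noteq> 0 \<and> A *v ev c = c *\<^sub>R ev c" if "c \<in> eigvals A" for c
    using that unfolding eigvals_def ev_def by (metis (mono_tags, lifting) mem_Collect_eq someI_ex)
  have orth: "ev c \<bullet> ev d = 0" if "c \<in> eigvals A" "d \<in> eigvals A" "c \<noteq> d" for c d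
  proof -
    have "c * (ev c \<bullet> ev d) = (A *v ev c) \<bullet> ev d" using ev[OF that(1)] by simp
    also have "\<dots> = ev c \<bullet> (A *v ev d)" using symm_inner[OF assms] by simp
    also have "\<dots> = d * (ev c \<bullet> ev d)" using ev[OF that(2)] by simp
    finally show ?thesis using that(3) by simp
  qed
  have inj: "inj_on ev (eigvals A)"
    by (rule inj_onI) (metis ev orth inner_eq_zero_iff)
  have "independent (ev ` eigvals A)"
    apply (rule pairwise_orthogonal_independent)
    unfolding pairwise_def orthogonal_def using orth ev by auto
  hence "finite (ev ` eigvals A)" using independent_bound by blast
  thus ?thesis using inj finite_imageD by blast
qed

lemma max_eig:
  fixes A :: "real^'n^'n"
  assumes "symm A"
  shows "\<exists>\<nu>\<in>eigvals A. \<forall>x. x \<bullet> (A *v x) \<le> \<nu> * (norm x)^2"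
proof -
  let ?R = "\<lambda>x. x \<bullet> (A *v x)"
  have "continuous_on (sphere 0 1) ?R"
    by (rule continuous_on_inner[OF continuous_on_id linear_continuous_on[OF matrix_vector_mul_bounded_linear]])
  moreover have "sphere (0::real^'n) 1 \<noteq> {}"
  proof -
    have "axis undefined 1 \<in> sphere (0::real^'n) 1" by (simp add: norm_axis_1)
    thus ?thesis by blast
  qed
  ultimately obtain x0 where x0: "x0 \<in> sphere 0 1" "\<And>y. y \<in> sphere 0 1 \<Longrightarrow> ?R y \<le> ?R x0"
    using continuous_attains_sup[OF compact_sphere] by blast
  define \<nu> where "\<nu> = ?R x0"
  have bound: "?R x \<le> \<nu> * (norm x)^2" for x
  proof (cases "x = 0")
    case True then show ?thesis by simp
  next
    case False
    let ?u = "x /\<^sub>R norm x"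
    have "?u \<in> sphere 0 1" using False by simp
    hence "?R ?u \<le> \<nu>" unfolding \<nu>_def by (rule x0(2))
    moreover have "?R x = (norm x)^2 * ?R ?u"
      using False by (simp add: matrix_vector_mult_scaleR power2_eq_square field_simps)
    ultimately show ?thesis
      by (metis mult.commute mult_right_mono zero_le_power2)
  qed
  have nx0: "norm x0 = 1" using x0 by simp
  define w where "w = A *v x0 - \<nu> *\<^sub>R x0"
  have quad: "2 * t * (w \<bullet> w) + t^2 * (?R w - \<nu> * (norm w)^2) \<le> 0" for t
  proof -
    have b: "?R (x0 + t *\<^sub>R w) \<le> \<nu> * (norm (x0 + t *\<^sub>R w))^2" by (rule bound)
    have s: "x0 \<bullet> (A *v w) = w \<bullet> (A *v x0)"
      using symm_inner[OF assms, of x0 w] by (simp add: inner_commute)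
    have e1: "?R (x0 + t *\<^sub>R w) = ?R x0 + 2 * t * (w \<bullet> (A *v x0)) + t^2 * ?R w"
      unfolding matrix_vector_right_distrib matrix_vector_mult_scaleR inner_add_left inner_add_right
        inner_scaleR_left inner_scaleR_right s
      by (simp add: power2_eq_square ring_distribs)
    have e2: "(norm (x0 + t *\<^sub>R w))^2 = 1 + 2 * t * (w \<bullet> x0) + t^2 * (norm w)^2"
      unfolding power2_norm_eq_inner inner_add_left inner_add_right
        inner_scaleR_left inner_scaleR_right
      using nx0 by (simp add: power2_norm_eq_inner[symmetric] power2_eq_square inner_commute ring_distribs)
    have e3: "w \<bullet> (A *v x0) - \<nu> * (w \<bullet> x0) = w \<bullet> w"
      by (simp add: w_def inner_diff_right)
    have r0: "?R x0 = \<nu>" using \<nu>_def by simp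
    have f: "2*t*(w \<bullet> w) = 2*t*(w \<bullet> (A*v x0)) - \<nu>*(2*t*(w \<bullet> x0))"
      unfolding e3[symmetric] by (simp add: algebra_simps)
    have g: "\<nu> * (1 + 2 * t * (w \<bullet> x0) + t^2 * (norm w)^2) = \<nu> + \<nu>*(2 * t * (w \<bullet> x0)) + t^2 * (\<nu> * (norm w)^2)"
      by (simp add: algebra_simps)
    have h: "t^2 * (?R w - \<nu> * (norm w)^2) = t^2 * ?R w - t^2 * (\<nu> * (norm w)^2)"
      by (simp add: algebra_simps)
    show ?thesis using b unfolding e1 e2 r0 g h f by linarith
  qed
  have "w \<bullet> w = 0"
  proof (rule ccontr)
    assume ne: "w \<bullet> w \<noteq> 0"
    hence p: "w \<bullet> w > 0" by (simp add: order_less_le)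
    define d where "d = ?R w - \<nu> * (norm w)^2"
    define t where "t = (w \<bullet> w) / (\<bar>d\<bar> + 1)"
    have t1: "t > 0" using t_def p by (simp add: abs_ge_zero add_nonneg_pos)
    have "t * (\<bar>d\<bar> + 1) = w \<bullet> w" using t_def by simp
    hence t: "t > 0" "t * \<bar>d\<bar> < w \<bullet> w" using t1 by (auto simp: algebra_simps)
    have "2 * t * (w \<bullet> w) + t^2 * d \<le> 0" using quad[of t] d_def by simp
    moreover have "t^2 * d \<ge> - t * (t * \<bar>d\<bar>)"
    proof -
      have "t * (- \<bar>d\<bar>) \<le> t * d" using t(1) by (intro mult_left_mono) auto
      hence "t * (t * (- \<bar>d\<bar>)) \<le> t * (t * d)" using t(1) by (intro mult_left_mono) auto
      thus ?thesis by (simp add: power2_eq_square)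
    qed
    moreover have "t * (t * \<bar>d\<bar>) < t * (w \<bullet> w)" using t by simp
    moreover have "2 * t * (w \<bullet> w) > 0" using t p by simp
    ultimately show False using p t by linarith
  qed
  hence "A *v x0 = \<nu> *\<^sub>R x0" unfolding w_def by simp
  moreover have "x0 \<noteq> 0" using nx0 by auto
  ultimately have "\<nu> \<in> eigvals A" unfolding eigvals_def by blast
  thus ?thesis using bound by blast
qed



lemma symm_neg: "symm A \<Longrightarrow> symm (- A)"
  unfolding symm_def by (simp add: vec_eq_iff transpose_def)

lemma min_eig:
  fixes A :: "real^'n^'n"
  assumes "symm A"
  shows "\<exists>\<mu>\<in>eigvals A. \<forall>x. \<mu> * (norm x)^2 \<le> x \<bullet> (A *v x)"
proof -
  obtain \<nu> where n: "\<nu> \<in> eigvals (- A)" "\<forall>x. x \<bullet> ((- A) *v x) \<le> \<nu> * (norm x)^2"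
    using max_eig[OF symm_neg[OF assms]] by blast
  have neg: "(- A) *v x = - (A *v x)" for x
    by (simp add: vec_eq_iff matrix_vector_mult_def sum_negf)
  have "- \<nu> \<in> eigvals A"
  proof -
    obtain v where v: "v \<noteq> 0" "- (A *v v) = \<nu> *\<^sub>R v" using n(1) unfolding eigvals_def neg by blast
    hence "A *v v = (- \<nu>) *\<^sub>R v" by (metis minus_equation_iff scaleR_minus_left)
    thus ?thesis using v(1) unfolding eigvals_def by blast
  qed
  moreover have "\<forall>x. (- \<nu>) * (norm x)^2 \<le> x \<bullet> (A *v x)"
  proof
    fix x
    have "- (x \<bullet> (A *v x)) \<le> \<nu> * (norm x)^2" using n(2) unfolding neg inner_minus_right by blast
    thus "(- \<nu>) * (norm x)^2 \<le> x \<bullet> (A *v x)" by linarith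
  qed
  ultimately show ?thesis by blast
qed

lemma gram_symm: "symm (\<chi> i j. 2 * (F i \<bullet> F j))"
  unfolding symm_def by (simp add: vec_eq_iff transpose_def inner_commute)

lemma gram_rayleigh:
  fixes F :: "'n::finite \<Rightarrow> real^'d"
  shows "x \<bullet> ((\<chi> i j. 2 * (F i \<bullet> F j)) *v x) = 2 * (norm (\<Sum>i\<in>UNIV. x$i *\<^sub>R F i))^2"
proof -
  define S where "S = (\<Sum>j\<in>UNIV. x$j *\<^sub>R F j)"
  have "(\<chi> i j. 2 * (F i \<bullet> F j)) *v x = (\<chi> i. 2 * (F i \<bullet> S))"
    unfolding S_def by (simp add: vec_eq_iff matrix_vector_mult_def inner_sum_right sum_distrib_left algebra_simps)
  hence "x \<bullet> ((\<chi> i j. 2 * (F i \<bullet> F j)) *v x) = (\<Sum>i\<in>UNIV. x$i * (2 * (F i \<bullet> S)))"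
    by (simp only: inner_vec_def inner_real_def vec_lambda_beta)
  also have "\<dots> = 2 * (S \<bullet> S)"
    unfolding S_def inner_sum_left inner_scaleR_left sum_distrib_left by (simp add: algebra_simps)
  finally show ?thesis unfolding S_def power2_norm_eq_inner .
qed

lemma hess_quad:
  fixes F :: "'n::finite \<Rightarrow> real^'d"
  shows "hessian (\<lambda>x. (norm ((\<Sum>j\<in>UNIV. (x$j) *\<^sub>R F j) - y))\<^sup>2) x = (\<chi> i j. 2 * (F i \<bullet> F j))"
proof -
  define r where "r = (\<Sum>k\<in>UNIV. (x$k) *\<^sub>R F k) - y"
  have ax: "(\<Sum>k\<in>UNIV. (c * axis i 1 $ k) *\<^sub>R F k) = c *\<^sub>R F i" for c i
    by (subst sum.remove[of _ i]) (auto simp: axis_def)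
  have e: "(\<Sum>k\<in>UNIV. ((x + t *\<^sub>R axis i 1 + s *\<^sub>R axis j 1)$k) *\<^sub>R F k) - y
      = r + t *\<^sub>R F i + s *\<^sub>R F j" for t s i j
    by (simp add: r_def scaleR_add_left sum.distrib ax)
  have p: "(norm (a + s *\<^sub>R b))\<^sup>2 = a \<bullet> a + 2 * s * (a \<bullet> b) + s^2 * (b \<bullet> b)" for a b :: "real^'d" and s
    unfolding power2_norm_eq_inner by (simp add: inner_add_left inner_add_right inner_commute power2_eq_square algebra_simps)
  have d1: "deriv (\<lambda>s. (norm (a + s *\<^sub>R b))\<^sup>2) 0 = 2 * (a \<bullet> b)" for a b :: "real^'d"
  proof -
    have "((\<lambda>s. a \<bullet> a + 2 * s * (a \<bullet> b) + s^2 * (b \<bullet> b)) has_real_derivative 2 * (a \<bullet> b)) (at 0)"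
      by (auto intro!: derivative_eq_intros)
    thus ?thesis unfolding p by (rule DERIV_imp_deriv)
  qed
  have d2: "deriv (\<lambda>t. 2 * ((r + t *\<^sub>R F i) \<bullet> F j)) 0 = 2 * (F i \<bullet> F j)" for i j
  proof -
    have "((\<lambda>t. 2 * (r \<bullet> F j) + 2 * t * (F i \<bullet> F j)) has_real_derivative 2 * (F i \<bullet> F j)) (at 0)"
      by (auto intro!: derivative_eq_intros)
    moreover have "(\<lambda>t. 2 * ((r + t *\<^sub>R F i) \<bullet> F j)) = (\<lambda>t. 2 * (r \<bullet> F j) + 2 * t * (F i \<bullet> F j))"
      by (simp add: inner_add_left algebra_simps)
    ultimately show ?thesis by (simp add: DERIV_imp_deriv)
  qed
  show ?thesis
    unfolding hessian_def e
    by (simp add: vec_eq_iff d1 d2 add.assoc[symmetric])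
qed

lemma lin_obj_eq: "lin_obj V y = (\<lambda>x. (norm ((\<Sum>j\<in>UNIV. (x$j) *\<^sub>R V j) - y))\<^sup>2)"
  by (simp add: fun_eq_iff lin_obj_def)

lemma grp_obj_eq: "grp_obj V y grp = (\<lambda>x. (norm ((\<Sum>g\<in>UNIV. (x$g) *\<^sub>R
    ((1 / real (card {j. grp j = g})) *\<^sub>R (\<Sum>j\<in>{j. grp j = g}. V j))) - y))\<^sup>2)"
  by (simp add: fun_eq_iff grp_obj_def)

lemma grp_lift:
  fixes V :: "'L::finite \<Rightarrow> real^'d" and grp :: "'L \<Rightarrow> 'k::finite" and x :: "real^'k"
  assumes gs: "\<forall>g. card {j. grp j = g} = m"
  defines "z \<equiv> (\<chi> j. x$(grp j) / real m)"
  shows "(\<Sum>j\<in>UNIV. z$j *\<^sub>R V j) = (\<Sum>g\<in>UNIV. (x$g) *\<^sub>R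
    ((1 / real (card {j. grp j = g})) *\<^sub>R (\<Sum>j\<in>{j. grp j = g}. V j)))"
    and "(norm z)^2 = (norm x)^2 / real m"
proof -
  have "(\<Sum>j\<in>UNIV. z$j *\<^sub>R V j) = (\<Sum>g\<in>UNIV. \<Sum>j\<in>{j\<in>UNIV. grp j = g}. z$j *\<^sub>R V j)"
    by (rule sum.group[symmetric]) auto
  also have "\<dots> = (\<Sum>g\<in>UNIV. (x$g / real m) *\<^sub>R (\<Sum>j\<in>{j. grp j = g}. V j))"
    unfolding scaleR_sum_right z_def by (intro sum.cong) auto
  also have "\<dots> = (\<Sum>g\<in>UNIV. (x$g) *\<^sub>R
    ((1 / real (card {j. grp j = g})) *\<^sub>R (\<Sum>j\<in>{j. grp j = g}. V j)))"
    using gs by simp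
  finally show "(\<Sum>j\<in>UNIV. z$j *\<^sub>R V j) = (\<Sum>g\<in>UNIV. (x$g) *\<^sub>R
    ((1 / real (card {j. grp j = g})) *\<^sub>R (\<Sum>j\<in>{j. grp j = g}. V j)))" .
  have "(norm z)^2 = (\<Sum>j\<in>UNIV. z$j * z$j)"
    unfolding power2_norm_eq_inner inner_vec_def by simp
  also have "\<dots> = (\<Sum>g\<in>UNIV. \<Sum>j\<in>{j\<in>UNIV. grp j = g}. z$j * z$j)"
    by (rule sum.group[symmetric]) auto
  also have "\<dots> = (\<Sum>g\<in>UNIV. real m * ((x$g / real m) * (x$g / real m)))"
    unfolding z_def using gs by (intro sum.cong) auto
  also have "\<dots> = (\<Sum>g\<in>UNIV. x$g * x$g) / real m"
    by (cases "m = 0") (auto simp: sum_divide_distrib intro!: sum.cong)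
  also have "\<dots> = (norm x)^2 / real m"
    unfolding power2_norm_eq_inner inner_vec_def by simp
  finally show "(norm z)^2 = (norm x)^2 / real m" .
qed

theorem theorem3:
  fixes V :: "'L::finite \<Rightarrow> real^'d" and y :: "real^'d"
    and grp :: "'L \<Rightarrow> 'k::finite" and m :: nat
    and \<alpha> :: "real^'L" and \<beta> :: "real^'k"
  assumes group_size: "\<forall>g. card {j. grp j = g} = m"
    and alpha_simplex: "(\<Sum>j\<in>UNIV. \<alpha> $ j) = 1" "\<forall>j. \<alpha> $ j > 0"
    and beta_simplex: "(\<Sum>g\<in>UNIV. \<beta> $ g) = 1" "\<forall>g. \<beta> $ g > 0"
    and pos: "lambda_min (hessian (lin_obj V y) \<alpha>) > 0"
             "lambda_min (hessian (grp_obj V y grp) \<beta>) > 0"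
  shows "cond_num (hessian (grp_obj V y grp) \<beta>) \<le> cond_num (hessian (lin_obj V y) \<alpha>)"
proof -
  define W where "W g = (1 / real (card {j. grp j = g})) *\<^sub>R (\<Sum>j\<in>{j. grp j = g}. V j)" for g
  define H :: "real^'L^'L" where "H = (\<chi> i j. 2 * (V i \<bullet> V j))"
  define Hb :: "real^'k^'k" where "Hb = (\<chi> i j. 2 * (W i \<bullet> W j))"
  have HH: "hessian (lin_obj V y) \<alpha> = H" unfolding H_def lin_obj_eq by (rule hess_quad)
  have HHb: "hessian (grp_obj V y grp) \<beta> = Hb" unfolding Hb_def grp_obj_eq W_def[symmetric] by (rule hess_quad)
  have mpos: "m > 0"
  proof -
    fix j0 :: 'L
    have "j0 \<in> {j. grp j = grp j0}" by simp
    hence "card {j. grp j = grp j0} > 0" by (metis card_gt_0_iff empty_iff finite)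
    thus ?thesis using group_size by simp
  qed
  have sH: "symm H" and sHb: "symm Hb" unfolding H_def Hb_def by (rule gram_symm)+
  have fH: "finite (eigvals H)" and fHb: "finite (eigvals Hb)" using eigvals_finite sH sHb by blast+
  obtain \<nu> where \<nu>: "\<nu> \<in> eigvals H" "\<And>x. x \<bullet> (H *v x) \<le> \<nu> * (norm x)^2"
    using max_eig[OF sH] by blast
  obtain \<mu> where \<mu>: "\<mu> \<in> eigvals H" "\<And>x. \<mu> * (norm x)^2 \<le> x \<bullet> (H *v x)"
    using min_eig[OF sH] by blast
  obtain \<nu>' where "\<nu>' \<in> eigvals Hb" using max_eig[OF sHb] by blast
  hence neHb: "eigvals Hb \<noteq> {}" by blast
  define A where "A = lambda_max H"
  define B where "B = lambda_min H"
  define a where "a = lambda_max Hb"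
  define b where "b = lambda_min Hb"
  have B0: "B > 0" using pos(1) HH B_def by simp
  have b0: "b > 0" using pos(2) HHb b_def by simp
  have "\<nu> \<le> A" unfolding A_def lambda_max_def using fH \<nu>(1) by simp
  have "B \<le> \<mu>" unfolding B_def lambda_min_def using fH \<mu>(1) by simp
  have ain: "a \<in> eigvals Hb" unfolding a_def lambda_max_def using fHb neHb by simp
  have bin: "b \<in> eigvals Hb" unfolding b_def lambda_min_def using fHb neHb by simp
  have key: "x \<bullet> (Hb *v x) = z \<bullet> (H *v z) \<and> (norm z)^2 = (norm x)^2 / real m"
    if "z = (\<chi> j. x$(grp j) / real m)" for x z
    unfolding Hb_def H_def gram_rayleigh that grp_lift[OF group_size] W_def by simp
  have "a \<le> \<nu> / real m"
  proof -
    obtain v where v: "v \<noteq> 0" "Hb *v v = a *\<^sub>R v" using ain unfolding eigvals_def by blast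
    define z where "z = (\<chi> j. v$(grp j) / real m)"
    have "a * (norm v)^2 = v \<bullet> (Hb *v v)" using eig_rayleigh[OF v(2)] by simp
    also have "\<dots> = z \<bullet> (H *v z)" using key[OF z_def] by simp
    also have "\<dots> \<le> \<nu> * (norm z)^2" by (rule \<nu>(2))
    also have "\<dots> = (\<nu> / real m) * (norm v)^2" using key[OF z_def] by simp
    finally have "a * (norm v)^2 \<le> (\<nu> / real m) * (norm v)^2" .
    moreover have "(norm v)^2 > 0" using v(1) by simp
    ultimately show ?thesis by (rule mult_right_le_imp_le)
  qed
  have "\<mu> / real m \<le> b"
  proof -
    obtain v where v: "v \<noteq> 0" "Hb *v v = b *\<^sub>R v" using bin unfolding eigvals_def by blast
    define z where "z = (\<chi> j. v$(grp j) / real m)"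
    have "(\<mu> / real m) * (norm v)^2 = \<mu> * (norm z)^2" using key[OF z_def] by simp
    also have "\<dots> \<le> z \<bullet> (H *v z)" by (rule \<mu>(2))
    also have "\<dots> = v \<bullet> (Hb *v v)" using key[OF z_def] by simp
    also have "\<dots> = b * (norm v)^2" using eig_rayleigh[OF v(2)] by simp
    finally have "(\<mu> / real m) * (norm v)^2 \<le> b * (norm v)^2" .
    moreover have "(norm v)^2 > 0" using v(1) by simp
    ultimately show ?thesis by (rule mult_right_le_imp_le)
  qed
  have am: "a \<le> A / real m" using \<open>a \<le> \<nu> / real m\<close> \<open>\<nu> \<le> A\<close> mpos
    by (meson divide_right_mono of_nat_0_le_iff order_trans)
  have bm: "B / real m \<le> b" using \<open>\<mu> / real m \<le> b\<close> \<open>B \<le> \<mu>\<close> mpos by (smt (verit) divide_right_mono of_nat_0_le_iff)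
  have A0: "A \<ge> 0" using B0 \<open>B \<le> \<mu>\<close> \<open>\<nu> \<le> A\<close> \<mu>(1)
    by (smt (verit) A_def Max_ge \<mu>(1) fH lambda_max_def)
  have "a * B \<le> (A / real m) * B" using am B0 by (intro mult_right_mono) auto
  also have "\<dots> \<le> (A / real m) * (real m * b)"
    using bm mpos A0 by (intro mult_left_mono) (auto simp: field_simps)
  also have "\<dots> = A * b" using mpos by simp
  finally have "a * B \<le> A * b" .
  hence "a / b \<le> A / B" using B0 b0 by (simp add: divide_le_eq field_simps)
  thus ?thesis unfolding cond_num_def HH HHb a_def b_def A_def B_def .
qed

end
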